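(* Let $n\ge1$, $G\le S_n$ and $\chi$ a character of $G$. Then $d_\chi^G(AB)=d_\chi^G(A)\,d_\chi^G(B)$ for all $A,B\in\mathbb S_n(\mathbb C)$ if and only if $d_\chi^G=\det$ on $M_n(\mathbb C)$.
   Context: A character of $G\le S_n$ is a function $g\mapsto\operatorname{tr}(\rho(g))$ for some homomorphism $\rho:G\to GL_m(\mathbb C)$, $m\ge1$. $\mathbb S_n(\mathbb C)$ is the set of complex symmetric $n\times n$ matrices. $d_\chi^G(A)=\sum_{\sigma\in G}\chi(\sigma)\prod_{i=1}^n A_{i\,\sigma(i)}$ for $A\in M_n(\mathbb C)$. *)

theory Defs
  imports "Jordan_Normal_Form.Determinant"
begin

definition perm_subgroup :: "nat \<Rightarrow> (nat \<Rightarrow> nat) set \<Rightarrow> bool" where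
  "perm_subgroup n G \<longleftrightarrow>
     G \<subseteq> {p. p permutes {0..<n}} \<and> id \<in> G \<and>
     (\<forall>p\<in>G. \<forall>q\<in>G. p \<circ> q \<in> G) \<and> (\<forall>p\<in>G. inv_into UNIV p \<in> G)"

definition mat_trace :: "complex mat \<Rightarrow> complex" where
  "mat_trace A = (\<Sum>i<dim_row A. A $$ (i, i))"

definition is_character :: "nat \<Rightarrow> (nat \<Rightarrow> nat) set \<Rightarrow> ((nat \<Rightarrow> nat) \<Rightarrow> complex) \<Rightarrow> bool" where
  "is_character n G \<chi> \<longleftrightarrow>
     (\<exists>m::nat. m \<ge> 1 \<and> (\<exists>\<rho> :: (nat \<Rightarrow> nat) \<Rightarrow> complex mat.
        (\<forall>g\<in>G. \<rho> g \<in> carrier_mat m m \<and> invertible_mat (\<rho> g)) \<and>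
        (\<forall>g\<in>G. \<forall>h\<in>G. \<rho> (g \<circ> h) = \<rho> g * \<rho> h) \<and>
        (\<forall>g\<in>G. \<chi> g = mat_trace (\<rho> g))))"

definition gen_mat_fun :: "nat \<Rightarrow> (nat \<Rightarrow> nat) set \<Rightarrow> ((nat \<Rightarrow> nat) \<Rightarrow> complex) \<Rightarrow> complex mat \<Rightarrow> complex" where
  "gen_mat_fun n G \<chi> A = (\<Sum>\<sigma>\<in>G. \<chi> \<sigma> * (\<Prod>i\<in>{0..<n}. A $$ (i, \<sigma> i)))"

definition symmetric_mat :: "nat \<Rightarrow> complex mat \<Rightarrow> bool" where
  "symmetric_mat n A \<longleftrightarrow> A \<in> carrier_mat n n \<and> transpose_mat A = A"

end

theory Submission
  imports Defs
begin

definition Mx :: "nat \<Rightarrow> nat \<Rightarrow> nat \<Rightarrow> complex \<Rightarrow> complex \<Rightarrow> complex mat" where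
  "Mx n i j a b = mat n n (\<lambda>(k,l). if k = l then (if k = i \<or> k = j then a else 1)
      else if (k = i \<and> l = j) \<or> (k = j \<and> l = i) then b else 0)"

lemma finite_G: "perm_subgroup n G \<Longrightarrow> finite G"
  unfolding perm_subgroup_def
  using finite_subset[OF _ finite_permutations[OF finite_atLeastLessThan[of 0 n]]] by blast

lemma perm_not_id: assumes "\<sigma> permutes {0..<n}" "\<sigma> \<noteq> id" shows "\<exists>k<n. \<sigma> k \<noteq> k"
proof (rule ccontr)
  assume "\<not> ?thesis"
  hence "\<And>k. \<sigma> k = k" using assms(1) unfolding permutes_def
    by (metis atLeastLessThan_iff not_less zero_le)
  hence "\<sigma> = id" by auto
  thus False using assms(2) by simp
qed

lemma d_one: assumes "perm_subgroup n G"
  shows "gen_mat_fun n G \<chi> (1\<^sub>m n) = \<chi> id"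
proof -
  have fin: "finite G" using finite_G[OF assms] .
  have idG: "id \<in> G" using assms unfolding perm_subgroup_def by auto
  have "gen_mat_fun n G \<chi> (1\<^sub>m n) = (\<Sum>\<sigma>\<in>G. if \<sigma> = id then \<chi> id else 0)"
    unfolding gen_mat_fun_def
  proof (rule sum.cong[OF refl])
    fix \<sigma> assume s: "\<sigma> \<in> G"
    show "\<chi> \<sigma> * (\<Prod>i = 0..<n. 1\<^sub>m n $$ (i, \<sigma> i)) = (if \<sigma> = id then \<chi> id else 0)"
    proof (cases "\<sigma> = id")
      case True then show ?thesis by simp
    next
      case False
      have "\<sigma> permutes {0..<n}" using s assms unfolding perm_subgroup_def by auto
      then obtain k where k: "k < n" "\<sigma> k \<noteq> k" using perm_not_id False by blast
      have "\<sigma> k < n" using \<open>\<sigma> permutes {0..<n}\<close> k(1) by (simp add: permutes_in_image)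
      hence "\<exists>a\<in>{0..<n}. (1\<^sub>m n :: complex mat) $$ (a, \<sigma> a) = 0" using k by force
      hence "(\<Prod>i = 0..<n. (1\<^sub>m n :: complex mat) $$ (i, \<sigma> i)) = 0"
        by (simp add: prod_zero)
      thus ?thesis using False by simp
    qed
  qed
  also have "\<dots> = \<chi> id" using fin idG by (simp add: sum.delta)
  finally show ?thesis .
qed

lemma idem_inv_one: assumes M: "M \<in> carrier_mat m m" and inv: "invertible_mat M" and idem: "M * M = M"
  shows "M = 1\<^sub>m m"
proof -
  obtain B where B1: "M * B = 1\<^sub>m (dim_row M)" and B2: "B * M = 1\<^sub>m (dim_row B)"
    using inv unfolding invertible_mat_def inverts_mat_def by blast
  have "dim_col (B * M) = m" using M by simp
  hence rB: "dim_row B = m" using B2 by simp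
  have "dim_col (M * B) = m" using B1 M by simp
  hence cB: "dim_col B = m" by simp
  have Bc: "B \<in> carrier_mat m m" using rB cB by auto
  have "M = (B * M) * M" using B2 rB M by simp
  also have "\<dots> = B * (M * M)" using Bc M by (simp add: assoc_mult_mat)
  also have "\<dots> = 1\<^sub>m m" using idem B2 rB by simp
  finally show ?thesis .
qed

lemma sum_two: fixes x y n :: nat assumes "x < n" "y < n" "x \<noteq> y" "\<And>r. r < n \<Longrightarrow> r \<noteq> x \<Longrightarrow> r \<noteq> y \<Longrightarrow> f r = 0"
  shows "(\<Sum>r\<in>{0..<n}. f r) = f x + f y"
proof -
  have "(\<Sum>r\<in>{0..<n}. f r) = (\<Sum>r\<in>{x,y}. f r)"
    using assms by (intro sum.mono_neutral_right) auto
  thus ?thesis using assms by simp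
qed

lemma sum_one: fixes x n :: nat assumes "x < n" "\<And>r. r < n \<Longrightarrow> r \<noteq> x \<Longrightarrow> f r = 0"
  shows "(\<Sum>r\<in>{0..<n}. f r) = f x"
proof -
  have "(\<Sum>r\<in>{0..<n}. f r) = (\<Sum>r\<in>{x}. f r)"
    using assms by (intro sum.mono_neutral_right) auto
  thus ?thesis using assms by simp
qed

lemma prod_two: fixes x y n :: nat assumes "x < n" "y < n" "x \<noteq> y" "\<And>r. r < n \<Longrightarrow> r \<noteq> x \<Longrightarrow> r \<noteq> y \<Longrightarrow> f r = 1"
  shows "(\<Prod>r\<in>{0..<n}. f r) = f x * f y"
proof -
  have "(\<Prod>r\<in>{0..<n}. f r) = (\<Prod>r\<in>{x,y}. f r)"
    using assms by (intro prod.mono_neutral_right) auto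
  thus ?thesis using assms by simp
qed

lemma mult_entry: assumes "A \<in> carrier_mat n n" "B \<in> carrier_mat n n" "k < n" "l < n"
  shows "(A * B) $$ (k, l) = (\<Sum>r\<in>{0..<n}. A $$ (k, r) * B $$ (r, l))"
  using assms by (simp add: scalar_prod_def)

lemma Mx_carrier[simp]: "Mx n i j a b \<in> carrier_mat n n"
  unfolding Mx_def by simp

lemma Mx_entry: "k < n \<Longrightarrow> l < n \<Longrightarrow> Mx n i j a b $$ (k, l) =
   (if k = l then (if k = i \<or> k = j then a else 1)
      else if (k = i \<and> l = j) \<or> (k = j \<and> l = i) then b else 0)"
  unfolding Mx_def by simp

lemma Mx_sym: "symmetric_mat n (Mx n i j a b)"
  unfolding symmetric_mat_def
  by (auto intro!: eq_matI simp: Mx_entry) (auto simp: Mx_def)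

lemma Mx_mult: assumes ij: "i < n" "j < n" "i \<noteq> j"
  shows "Mx n i j a b * Mx n i j c e = Mx n i j (a*c+b*e) (a*e+b*c)"
proof (rule eq_matI)
  fix k l assume kl: "k < dim_row (Mx n i j (a*c+b*e) (a*e+b*c))" "l < dim_col (Mx n i j (a*c+b*e) (a*e+b*c))"
  hence k: "k < n" and l: "l < n" by (auto simp: Mx_def)
  have e: "(Mx n i j a b * Mx n i j c e) $$ (k, l) = (\<Sum>r\<in>{0..<n}. Mx n i j a b $$ (k, r) * Mx n i j c e $$ (r, l))"
    using k l by (intro mult_entry) auto
  show "(Mx n i j a b * Mx n i j c e) $$ (k, l) = Mx n i j (a*c+b*e) (a*e+b*c) $$ (k, l)"
  proof (cases "k = i \<or> k = j")
    case True
    have "(\<Sum>r\<in>{0..<n}. Mx n i j a b $$ (k, r) * Mx n i j c e $$ (r, l))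
       = Mx n i j a b $$ (k, i) * Mx n i j c e $$ (i, l) + Mx n i j a b $$ (k, j) * Mx n i j c e $$ (j, l)"
      using ij k True by (intro sum_two) (auto simp: Mx_entry)
    thus ?thesis using e True ij k l by (auto simp: Mx_entry)
  next
    case False
    have "(\<Sum>r\<in>{0..<n}. Mx n i j a b $$ (k, r) * Mx n i j c e $$ (r, l))
       = Mx n i j a b $$ (k, k) * Mx n i j c e $$ (k, l)"
      using ij k False by (intro sum_one) (auto simp: Mx_entry)
    thus ?thesis using e False ij k l by (auto simp: Mx_entry)
  qed
qed (auto simp: Mx_def)

lemma Mx_zero_entry:
  fixes \<sigma> :: "nat \<Rightarrow> nat" and n i j :: nat
  assumes ij: "i < n" "j < n" "i \<noteq> j" and s: "\<sigma> permutes {0..<n}"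
    and ne: "\<sigma> \<noteq> id" "\<sigma> \<noteq> Transposition.transpose i j"
  shows "\<exists>k<n. \<sigma> k \<noteq> k \<and> \<not> ((k = i \<and> \<sigma> k = j) \<or> (k = j \<and> \<sigma> k = i))"
proof (rule ccontr)
  assume "\<not> ?thesis"
  hence H: "\<And>k. k < n \<Longrightarrow> \<sigma> k = k \<or> (k = i \<and> \<sigma> k = j) \<or> (k = j \<and> \<sigma> k = i)" by blast
  have out: "\<And>k. k \<ge> n \<Longrightarrow> \<sigma> k = k" proof -
    fix k :: nat assume "k \<ge> n" hence "k \<notin> {0..<n}" by simp
    thus "\<sigma> k = k" using s by (simp add: permutes_not_in)
  qed
  have inj: "inj \<sigma>" using s permutes_inj by blast
  show False
  proof (cases "\<sigma> i = i")
    case True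
    have "\<sigma> j = j" using H[OF ij(2)] True ij(3) inj by (metis injD)
    hence "\<sigma> = id" using H out True by (metis eq_id_iff not_less)
    thus False using ne by simp
  next
    case False
    hence si: "\<sigma> i = j" using H[OF ij(1)] by auto
    have "\<sigma> j = i" using H[OF ij(2)] si ij(3) inj by (metis injD)
    hence "\<sigma> = Transposition.transpose i j" using H out si
      by (intro ext) (metis not_less transpose_def)
    thus False using ne by simp
  qed
qed

lemma d_Mx: assumes G: "perm_subgroup n G" and ij: "i < n" "j < n" "i \<noteq> j"
  shows "gen_mat_fun n G \<chi> (Mx n i j a b) = \<chi> id * a^2 +
     (if Transposition.transpose i j \<in> G then \<chi> (Transposition.transpose i j) * b^2 else 0)"
proof -
  let ?t = "Transposition.transpose i j"
  have fin: "finite G" using finite_G[OF G] .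
  have idG: "id \<in> G" using G unfolding perm_subgroup_def by auto
  have tne: "?t \<noteq> id" using ij by (metis id_apply transpose_apply_first)
  have P1: "(\<Prod>k = 0..<n. Mx n i j a b $$ (k, k)) = a^2"
  proof -
    have "(\<Prod>k = 0..<n. Mx n i j a b $$ (k, k)) = Mx n i j a b $$ (i, i) * Mx n i j a b $$ (j, j)"
      using ij by (intro prod_two) (auto simp: Mx_entry)
    thus ?thesis using ij by (simp add: Mx_entry power2_eq_square)
  qed
  have P2: "(\<Prod>k = 0..<n. Mx n i j a b $$ (k, ?t k)) = b^2"
  proof -
    have "(\<Prod>k = 0..<n. Mx n i j a b $$ (k, ?t k)) = Mx n i j a b $$ (i, ?t i) * Mx n i j a b $$ (j, ?t j)"
      using ij by (intro prod_two) (auto simp: Mx_entry transpose_def)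
    thus ?thesis using ij by (simp add: Mx_entry power2_eq_square)
  qed
  have "gen_mat_fun n G \<chi> (Mx n i j a b) = (\<Sum>\<sigma>\<in>G. (if \<sigma> = id then \<chi> id * a^2 else 0) +
      (if \<sigma> = ?t then \<chi> ?t * b^2 else 0))"
    unfolding gen_mat_fun_def
  proof (rule sum.cong[OF refl])
    fix \<sigma> assume s: "\<sigma> \<in> G"
    have sp: "\<sigma> permutes {0..<n}" using s G unfolding perm_subgroup_def by auto
    show "\<chi> \<sigma> * (\<Prod>k = 0..<n. Mx n i j a b $$ (k, \<sigma> k)) = (if \<sigma> = id then \<chi> id * a^2 else 0) +
      (if \<sigma> = ?t then \<chi> ?t * b^2 else 0)"
    proof (cases "\<sigma> = id \<or> \<sigma> = ?t")
      case True
      then show ?thesis using P1 P2 tne by auto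
    next
      case False
      then obtain k where k: "k < n" "\<sigma> k \<noteq> k" "\<not> ((k = i \<and> \<sigma> k = j) \<or> (k = j \<and> \<sigma> k = i))"
        using Mx_zero_entry[OF ij sp] by blast
      have "\<sigma> k < n" using sp k(1) by (simp add: permutes_in_image)
      hence "\<exists>r\<in>{0..<n}. Mx n i j a b $$ (r, \<sigma> r) = 0" using k by (intro bexI[of _ k]) (auto simp: Mx_entry)
      hence "(\<Prod>k = 0..<n. Mx n i j a b $$ (k, \<sigma> k)) = 0" by (simp add: prod_zero)
      thus ?thesis using False by simp
    qed
  qed
  also have "\<dots> = \<chi> id * a^2 + (if ?t \<in> G then \<chi> ?t * b^2 else 0)"
    using fin idG by (simp add: sum.distrib sum.delta)
  finally show ?thesis .
qed

lemma d_det_of_G: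
  assumes G: "G = {p. p permutes {0..<n}}" and chi: "\<And>p. p permutes {0..<n} \<Longrightarrow> \<chi> p = of_int (sign p)"
    and A: "A \<in> carrier_mat n n"
  shows "gen_mat_fun n G \<chi> A = det A"
  unfolding gen_mat_fun_def det_def using A G chi by (auto intro!: sum.cong)

theorem mainTheorem15:
  fixes n :: nat and G :: "(nat \<Rightarrow> nat) set" and \<chi> :: "(nat \<Rightarrow> nat) \<Rightarrow> complex"
  assumes "n \<ge> 1" and "perm_subgroup n G" and "is_character n G \<chi>"
  shows "(\<forall>A B. symmetric_mat n A \<longrightarrow> symmetric_mat n B \<longrightarrow>
            gen_mat_fun n G \<chi> (A * B) = gen_mat_fun n G \<chi> A * gen_mat_fun n G \<chi> B)
         \<longleftrightarrow> (\<forall>A\<in>carrier_mat n n. gen_mat_fun n G \<chi> A = det A)"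
proof
  assume H: "\<forall>A\<in>carrier_mat n n. gen_mat_fun n G \<chi> A = det A"
  show "\<forall>A B. symmetric_mat n A \<longrightarrow> symmetric_mat n B \<longrightarrow>
            gen_mat_fun n G \<chi> (A * B) = gen_mat_fun n G \<chi> A * gen_mat_fun n G \<chi> B"
  proof (intro allI impI)
    fix A B assume a: "symmetric_mat n A" and b: "symmetric_mat n B"
    hence Ac: "A \<in> carrier_mat n n" and Bc: "B \<in> carrier_mat n n" unfolding symmetric_mat_def by auto
    hence "A * B \<in> carrier_mat n n" by simp
    thus "gen_mat_fun n G \<chi> (A * B) = gen_mat_fun n G \<chi> A * gen_mat_fun n G \<chi> B"
      using H Ac Bc det_mult[OF Ac Bc] by simp
  qed
next
  let ?d = "gen_mat_fun n G \<chi>"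
  assume H: "\<forall>A B. symmetric_mat n A \<longrightarrow> symmetric_mat n B \<longrightarrow> ?d (A * B) = ?d A * ?d B"
  have G: "perm_subgroup n G" by fact
  have idG: "id \<in> G" and compG: "\<And>p q. p \<in> G \<Longrightarrow> q \<in> G \<Longrightarrow> p \<circ> q \<in> G"
    and permG: "\<And>p. p \<in> G \<Longrightarrow> p permutes {0..<n}"
    using G unfolding perm_subgroup_def by auto
  obtain m \<rho> where m: "m \<ge> 1" and rc: "\<And>g. g \<in> G \<Longrightarrow> \<rho> g \<in> carrier_mat m m \<and> invertible_mat (\<rho> g)"
    and rh: "\<And>g h. g \<in> G \<Longrightarrow> h \<in> G \<Longrightarrow> \<rho> (g \<circ> h) = \<rho> g * \<rho> h"
    and ch: "\<And>g. g \<in> G \<Longrightarrow> \<chi> g = mat_trace (\<rho> g)"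
    using assms(3) unfolding is_character_def by metis
  have "\<rho> id = \<rho> id * \<rho> id" using rh[OF idG idG] by simp
  hence rid: "\<rho> id = 1\<^sub>m m" using idem_inv_one rc[OF idG] by metis
  have cid: "\<chi> id = of_nat m" using ch[OF idG] rid unfolding mat_trace_def by simp
  have sym1: "symmetric_mat n (1\<^sub>m n)" unfolding symmetric_mat_def by auto
  have "?d (1\<^sub>m n * 1\<^sub>m n) = ?d (1\<^sub>m n) * ?d (1\<^sub>m n)" using H sym1 by blast
  hence "\<chi> id = \<chi> id * \<chi> id" using d_one[OF G] by simp
  hence "(of_nat m :: complex) = of_nat (m * m)" using cid by simp
  hence "m = m * m" using of_nat_eq_iff by blast
  hence m1: "m = 1" using m by simp
  have cid1: "\<chi> id = 1" using cid m1 by simp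
  have chmult: "\<chi> (g \<circ> h) = \<chi> g * \<chi> h" if g: "g \<in> G" and h: "h \<in> G" for g h
  proof -
    have gc: "\<rho> g \<in> carrier_mat 1 1" and hc: "\<rho> h \<in> carrier_mat 1 1" using rc g h m1 by auto
    have "\<chi> (g \<circ> h) = mat_trace (\<rho> g * \<rho> h)" using ch[OF compG[OF g h]] rh[OF g h] by simp
    also have "\<dots> = \<rho> g $$ (0,0) * \<rho> h $$ (0,0)"
      using gc hc unfolding mat_trace_def by (simp add: scalar_prod_def)
    also have "\<dots> = \<chi> g * \<chi> h" using ch[OF g] ch[OF h] gc hc unfolding mat_trace_def by simp
    finally show ?thesis .
  qed
  have transp: "Transposition.transpose a b \<in> G \<and> \<chi> (Transposition.transpose a b) = -1"
    if ab: "a < n" "b < n" "a \<noteq> b" for a b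
  proof -
    define t where "t = (if Transposition.transpose a b \<in> G then \<chi> (Transposition.transpose a b) else 0)"
    have dM: "?d (Mx n a b x y) = x^2 + t * y^2" for x y
      using d_Mx[OF G ab, of \<chi> x y] cid1 unfolding t_def by auto
    have "?d (Mx n a b 0 1 * Mx n a b 0 1) = ?d (Mx n a b 0 1) * ?d (Mx n a b 0 1)"
      using H Mx_sym by blast
    hence e1: "1 = t * t" using Mx_mult[OF ab, of 0 1 0 1] dM by (simp add: power2_eq_square)
    have "?d (Mx n a b 1 1 * Mx n a b 1 1) = ?d (Mx n a b 1 1) * ?d (Mx n a b 1 1)"
      using H Mx_sym by blast
    hence e2: "4 + 4 * t = (1 + t) * (1 + t)" using Mx_mult[OF ab, of 1 1 1 1] dM
      by (simp add: power2_eq_square mult.commute)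
    have h: "2 * (1 + t) = 0" using e1 e2 by (simp add: algebra_simps)
    have "t = -1"
    proof -
      have "1 + t = 0" using h by (subst (asm) mult_eq_0_iff) simp
      thus ?thesis by (simp add: add_eq_0_iff)
    qed
    thus ?thesis unfolding t_def by (auto split: if_splits)
  qed
  have all: "p \<in> G \<and> \<chi> p = of_int (sign p)" if p: "p permutes {0..<n}" for p
    using p finite_atLeastLessThan
  proof (induction rule: permutes_induct)
    case id
    then show ?case using idG cid1 by (simp add: id_def)
  next
    case (swap a b p)
    have ab: "a < n" "b < n" "a \<noteq> b" using swap by auto
    have tG: "Transposition.transpose a b \<in> G" and tc: "\<chi> (Transposition.transpose a b) = -1"
      using transp[OF ab] by auto
    have "sign (Transposition.transpose a b \<circ> p) = sign (Transposition.transpose a b) * sign p"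
      by (rule sign_compose) (use swap in \<open>auto intro: permutation_swap_id permutes_imp_permutation[OF finite_atLeastLessThan]\<close>)
    hence sg: "sign (Transposition.transpose a b \<circ> p) = - sign p" using ab by (simp add: sign_swap_id)
    have 1: "Transposition.transpose a b \<circ> p \<in> G" using compG[OF tG] swap by blast
    have "\<chi> (Transposition.transpose a b \<circ> p) = \<chi> (Transposition.transpose a b) * \<chi> p"
      using chmult[OF tG] swap by blast
    also have "\<dots> = of_int (- sign p)" using tc swap by simp
    also have "\<dots> = of_int (sign (Transposition.transpose a b \<circ> p))" using sg by simp
    finally show ?case using 1 by blast
  qed
  have GG: "G = {p. p permutes {0..<n}}" using all permG by blast
  show "\<forall>A\<in>carrier_mat n n. ?d A = det A"
    using d_det_of_G[OF GG] all by blast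
qed

end
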